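(* Let $p$ be a binary word of length $l$ with $r\le 3$ runs. For every $n\ge l$ there exists a $p$-optimal binary word of length $n$ having exactly $r$ runs.
   Context: $c_p(w)$ is the number of occurrences of $p$ as a (not necessarily consecutive) subsequence of $w$. $M_{n,p}=\max\{c_p(w): w\in\{0,1\}^n\}$; a binary word $w$ of length $n$ is $p$-optimal if $c_p(w)=M_{n,p}$. A run is a maximal block of consecutive equal letters. *)

theory Defs
  imports Main
begin

text \<open>Binary words are lists of booleans (False = 0, True = 1).\<close>

definition subseq_count :: "bool list \<Rightarrow> bool list \<Rightarrow> nat" where
  "subseq_count p w = card {I. I \<subseteq> {0..<length w} \<and> card I = length p \<and> nths w I = p}"

definition max_count :: "nat \<Rightarrow> bool list \<Rightarrow> nat" where
  "max_count n p = Max {subseq_count p w | w. length w = n}"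

definition p_optimal :: "bool list \<Rightarrow> bool list \<Rightarrow> bool" where
  "p_optimal p w \<longleftrightarrow> subseq_count p w = max_count (length w) p"

definition runs :: "bool list \<Rightarrow> nat" where
  "runs w = length (remdups_adj w)"

end

theory Submission
  imports Defs
begin


fun cnt :: "bool list \<Rightarrow> bool list \<Rightarrow> nat" where
  "cnt [] w = 1"
| "cnt (x#p) [] = 0"
| "cnt (x#p) (y#w) = cnt (x#p) w + (if x = y then cnt p w else 0)"

definition SS :: "bool list \<Rightarrow> bool list \<Rightarrow> nat set set" where
  "SS p w = {I. I \<subseteq> {0..<length w} \<and> card I = length p \<and> nths w I = p}"

lemma SS_fin: "finite (SS p w)"
  by (rule finite_subset[of _ "Pow {0..<length w}"]) (auto simp: SS_def)

lemma SS_Nil: "SS [] w = {{}}"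
proof -
  have "I \<subseteq> {0..<length w} \<Longrightarrow> card I = 0 \<Longrightarrow> I = {}" for I
    using finite_subset by fastforce
  then show ?thesis by (auto simp: SS_def)
qed

lemma SS_Nil2: "SS (x#p) [] = {}"
  by (auto simp: SS_def)

lemma shift_back: "{j. Suc j \<in> Suc ` J} = J" by auto
lemma shift_back2: "{j. Suc j \<in> insert 0 (Suc ` J)} = J" by auto

lemma SS_Cons: "SS (x#p) (y#w) = image Suc ` SS (x#p) w \<union>
   (if x = y then (\<lambda>J. insert 0 (Suc ` J)) ` SS p w else {})" (is "?L = ?A \<union> ?B")
proof (intro equalityI subsetI)
  fix I assume I: "I \<in> ?L"
  define J where "J = {j. Suc j \<in> I}"
  have fI: "finite I" using I unfolding SS_def using finite_subset by blast
  have JI: "J \<subseteq> {0..<length w}" using I unfolding SS_def J_def by auto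
  have fJ: "finite J" using JI finite_subset by blast
  show "I \<in> ?A \<union> ?B"
  proof (cases "0 \<in> I")
    case True
    have Ieq: "I = insert 0 (Suc ` J)" unfolding J_def using True
      by (auto simp: image_iff) (metis not0_implies_Suc)
    have cI: "card I = Suc (card J)" unfolding Ieq using fJ
      by (simp add: card_image)
    have n: "nths (y#w) I = y # nths w J" using True by (simp add: nths_Cons J_def)
    from I have "x = y" "card J = length p" "nths w J = p" using n cI by (auto simp: SS_def)
    then have "J \<in> SS p w" using JI by (auto simp: SS_def)
    then show ?thesis using Ieq \<open>x = y\<close> by auto
  next
    case False
    have Ieq: "I = Suc ` J" unfolding J_def using False
      by (auto simp: image_iff) (metis not0_implies_Suc)
    have cI: "card I = card J" unfolding Ieq using fJ
      by (simp add: card_image)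
    have n: "nths (y#w) I = nths w J" using False by (simp add: nths_Cons J_def)
    from I have "card J = length (x#p)" "nths w J = x#p" using n cI by (auto simp: SS_def)
    then have "J \<in> SS (x#p) w" using JI by (auto simp: SS_def)
    then show ?thesis using Ieq by auto
  qed
next
  fix I assume "I \<in> ?A \<union> ?B"
  then show "I \<in> ?L"
  proof
    assume "I \<in> ?A"
    then obtain J where J: "J \<in> SS (x#p) w" "I = Suc ` J" by auto
    have "finite J" using J(1) unfolding SS_def using finite_subset by blast
    then show ?thesis using J by (auto simp: SS_def nths_Cons shift_back card_image)
  next
    assume "I \<in> ?B"
    then obtain J where J: "J \<in> SS p w" "I = insert 0 (Suc ` J)" "x = y" by (auto split: if_splits)
    have "finite J" using J(1) unfolding SS_def using finite_subset by blast
    then show ?thesis using J by (auto simp: SS_def nths_Cons shift_back shift_back2 card_image)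
  qed
qed

lemma SS_card: "card (SS p w) = cnt p w"
proof (induction p w rule: cnt.induct)
  case (1 w) then show ?case by (simp add: SS_Nil)
next
  case (2 x p) then show ?case by (simp add: SS_Nil2)
next
  case (3 x p y w)
  have d: "image Suc ` SS (x#p) w \<inter> (\<lambda>J. insert 0 (Suc ` J)) ` SS p w = {}" by auto
  have i1: "inj_on (image Suc) (SS (x#p) w)" by (simp add: inj_on_def inj_image_eq_iff)
  have i2: "inj_on (\<lambda>J. insert 0 (Suc ` J)) (SS p w)"
    by (rule inj_onI) (metis shift_back2)
  show ?case
  proof (cases "x = y")
    case True
    then show ?thesis unfolding SS_Cons using d i1 i2 3
      by (simp add: card_Un_disjoint SS_fin card_image)
  next
    case False
    then show ?thesis unfolding SS_Cons using i1 3
      by (simp add: card_image)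
  qed
qed

lemma subseq_count_cnt: "subseq_count p w = cnt p w"
  using SS_card by (simp add: subseq_count_def SS_def)



definition ca :: "bool \<Rightarrow> bool list \<Rightarrow> nat" where
  "ca c w = length (filter (\<lambda>x. x = c) w)"

lemma ca_simps[simp]: "ca c [] = 0" "ca c (y#w) = (if y = c then Suc (ca c w) else ca c w)"
  "ca c (u @ v) = ca c u + ca c v" "ca c (replicate m d) = (if d = c then m else 0)"
  by (auto simp: ca_def)

lemma ca_le: "ca c w \<le> length w" by (simp add: ca_def)

lemma ca_compl: "ca c w + ca (\<not>c) w = length w"
  unfolding ca_def using sum_length_filter_compl[of "\<lambda>x. x = c" w] by auto

lemma L1: "cnt (replicate i c) w = ca c w choose i"
proof (induction w arbitrary: i)
  case Nil then show ?case by (cases i) auto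
next
  case (Cons y w)
  show ?case
  proof (cases i)
    case 0 then show ?thesis by simp
  next
    case (Suc i')
    have "cnt (c # replicate i' c) (y#w) = cnt (c # replicate i' c) w + (if c = y then cnt (replicate i' c) w else 0)"
      by simp
    also have "\<dots> = (ca c w choose Suc i') + (if c = y then ca c w choose i' else 0)"
      using Cons.IH[of "Suc i'"] Cons.IH[of i'] by (cases "c = y") simp_all
    finally show ?thesis using Suc by auto
  qed
qed

lemma L2: "cnt (replicate j c @ replicate k (\<not>c)) w \<le> (ca c w choose j) * (ca (\<not>c) w choose k)"
proof (induction w arbitrary: j)
  case Nil then show ?case by (cases j; cases k) auto
next
  case (Cons y w)
  show ?case
  proof (cases j)
    case 0 then show ?thesis using L1[of k "\<not>c" "y#w"] by auto
  next
    case (Suc j')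
    show ?thesis
    proof (cases "y = c")
      case True
      have "cnt (replicate j c @ replicate k (\<not>c)) (y#w) =
        cnt (replicate j c @ replicate k (\<not>c)) w + cnt (replicate j' c @ replicate k (\<not>c)) w"
        using Suc True by simp
      also have "\<dots> \<le> (ca c w choose j) * (ca (\<not>c) w choose k) + (ca c w choose j') * (ca (\<not>c) w choose k)"
        using Cons[of j] Cons[of j'] by linarith
      also have "\<dots> = (ca c (y#w) choose j) * (ca (\<not>c) (y#w) choose k)"
        using Suc True by (simp add: algebra_simps)
      finally show ?thesis .
    next
      case False
      then have yc: "y = (\<not>c)" by auto
      have "cnt (replicate j c @ replicate k (\<not>c)) (y#w) =
        cnt (replicate j c @ replicate k (\<not>c)) w" using Suc False by simp
      also have "\<dots> \<le> (ca c w choose j) * (ca (\<not>c) w choose k)" using Cons[of j] by simp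
      also have "\<dots> \<le> (ca c (y#w) choose j) * (ca (\<not>c) (y#w) choose k)"
        using yc by (auto intro!: mult_mono binomial_right_mono)
      finally show ?thesis .
    qed
  qed
qed

lemma L3shift: "(\<Sum>m<length (y#w). if (y#w)!m = (\<not>c) then (ca c (take m (y#w)) choose i) * cnt q (drop (Suc m) (y#w)) else 0)
     = (if y = (\<not>c) then (0 choose i) * cnt q w else 0) +
       (\<Sum>m<length w. if w!m = (\<not>c) then (ca c (y # take m w) choose i) * cnt q (drop (Suc m) w) else 0)"
proof -
    have "(\<Sum>m<length (y#w). if (y#w)!m = (\<not>c) then (ca c (take m (y#w)) choose i) * cnt q (drop (Suc m) (y#w)) else 0)
     = (if y = (\<not>c) then (0 choose i) * cnt q w else 0) +
       (\<Sum>m<length w. if (y#w)!(Suc m) = (\<not>c) then (ca c (take (Suc m) (y#w)) choose i) * cnt q (drop (Suc (Suc m)) (y#w)) else 0)"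
      by (simp only: length_Cons sum.lessThan_Suc_shift) simp
    also have "(\<Sum>m<length w. if (y#w)!(Suc m) = (\<not>c) then (ca c (take (Suc m) (y#w)) choose i) * cnt q (drop (Suc (Suc m)) (y#w)) else 0)
      = (\<Sum>m<length w. if w!m = (\<not>c) then (ca c (y # take m w) choose i) * cnt q (drop (Suc m) w) else 0)"
      by (intro sum.cong refl) (simp only: nth_Cons_Suc take_Suc_Cons drop_Suc_Cons)
    finally show ?thesis .
qed

lemma L3: "cnt (replicate i c @ (\<not>c) # q) w =
  (\<Sum>m<length w. if w!m = (\<not>c) then (ca c (take m w) choose i) * cnt q (drop (Suc m) w) else 0)"
proof (induction w arbitrary: i)
  case Nil then show ?case by (cases i) auto
next
  case (Cons y w)
  note sh = L3shift[where c=c and i=i and q=q and y=y and w=w]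
  show ?case
  proof (cases i)
    case 0
    have e: "(ca c (y # take m w) choose 0) = (ca c (take m w) choose 0)" for m by simp
    have ih: "cnt ((\<not>c) # q) w = (\<Sum>m<length w. if w!m = (\<not>c) then cnt q (drop (Suc m) w) else 0)"
      using Cons[of 0, unfolded binomial_n_0] by (simp cong: if_cong)
    have "cnt ((\<not>c) # q) (y#w) = (if y = (\<not>c) then cnt q w else 0) + (\<Sum>m<length w. if w!m = (\<not>c) then cnt q (drop (Suc m) w) else 0)"
      using ih by auto
    moreover have "(\<Sum>m<length (y#w). if (y#w)!m = (\<not>c) then (ca c (take m (y#w)) choose 0) * cnt q (drop (Suc m) (y#w)) else 0)
      = (if y = (\<not>c) then cnt q w else 0) + (\<Sum>m<length w. if w!m = (\<not>c) then cnt q (drop (Suc m) w) else 0)"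
      by (subst L3shift) (simp cong: if_cong)
    ultimately show ?thesis unfolding 0 by (metis append.simps(1) replicate_0)
  next
    case (Suc i')
    show ?thesis
    proof (cases "y = c")
      case True
      have "cnt (replicate i c @ (\<not>c) # q) (y#w) = cnt (replicate i c @ (\<not>c) # q) w
          + cnt (replicate i' c @ (\<not>c) # q) w" using Suc True by simp
      also have "\<dots> = (\<Sum>m<length w. if w!m = (\<not>c) then (ca c (y # take m w) choose i) * cnt q (drop (Suc m) w) else 0)"
        unfolding Cons[of i] Cons[of i'] sum.distrib[symmetric] using Suc True
        by (intro sum.cong) (auto simp: algebra_simps)
      finally show ?thesis unfolding L3shift using True by simp
    next
      case False
      have "cnt (replicate i c @ (\<not>c) # q) (y#w) = cnt (replicate i c @ (\<not>c) # q) w"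
        using Suc False by simp
      moreover have "ca c (y # take m w) = ca c (take m w)" for m using False by simp
      ultimately show ?thesis unfolding L3shift Cons[of i] using False Suc by (simp cong: if_cong)
    qed
  qed
qed

lemma Z2: "d \<in> set P \<Longrightarrow> d \<notin> set V \<Longrightarrow> cnt P V = 0"
  by (induction P V rule: cnt.induct) auto

lemma GL:
  assumes "Q = [] \<or> hd Q \<noteq> c" and "\<forall>i>0. cnt (replicate i c @ Q) W = 0"
  shows "cnt (replicate i c @ Q) (replicate x c @ W) = (x choose i) * cnt Q W"
proof (induction x arbitrary: i)
  case 0 then show ?case using assms(2) by (cases i) auto
next
  case (Suc x)
  show ?case
  proof (cases i)
    case 0
    have "cnt Q (c # replicate x c @ W) = cnt Q (replicate x c @ W)"
      using assms(1) by (cases Q) auto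
    then show ?thesis using 0 Suc[of 0] by simp
  next
    case (Suc i')
    then show ?thesis using Suc.IH[of i] Suc.IH[of i'] by (simp add: algebra_simps)
  qed
qed

lemma val3:
  assumes "j > 0"
  shows "cnt (replicate i a @ replicate j (\<not>a) @ replicate k a) (replicate x a @ replicate y (\<not>a) @ replicate z a)
    = (x choose i) * (y choose j) * (z choose k)"
proof -
  have in2: "cnt (replicate j (\<not>a) @ replicate k a) (replicate y (\<not>a) @ replicate z a) = (y choose j) * (z choose k)"
  proof -
    have "cnt (replicate j (\<not>a) @ replicate k a) (replicate y (\<not>a) @ replicate z a) = (y choose j) * cnt (replicate k a) (replicate z a)"
      by (rule GL) (auto intro!: Z2[of "\<not>a"] simp: hd_replicate)
    then show ?thesis by (simp add: L1)
  qed
  have "cnt (replicate i a @ (replicate j (\<not>a) @ replicate k a)) (replicate x a @ (replicate y (\<not>a) @ replicate z a))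
     = (x choose i) * cnt (replicate j (\<not>a) @ replicate k a) (replicate y (\<not>a) @ replicate z a)"
  proof (rule GL)
    show "replicate j (\<not>a) @ replicate k a = [] \<or> hd (replicate j (\<not>a) @ replicate k a) \<noteq> a"
      using assms by (cases j) auto
    show "\<forall>i>0. cnt (replicate i a @ replicate j (\<not>a) @ replicate k a) (replicate y (\<not>a) @ replicate z a) = 0"
    proof (intro allI impI)
      fix i :: nat assume "i > 0"
      then obtain i' where i: "i = Suc i'" by (cases i) auto
      have "cnt (a # (replicate i' a @ replicate j (\<not>a) @ replicate k a)) (replicate y (\<not>a) @ V) =
            cnt (a # (replicate i' a @ replicate j (\<not>a) @ replicate k a)) V" for V
        by (induction y) auto
      moreover have "cnt (a # (replicate i' a @ replicate j (\<not>a) @ replicate k a)) (replicate z a) = 0"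
        using assms by (intro Z2[of "\<not>a"]) auto
      ultimately show "cnt (replicate i a @ replicate j (\<not>a) @ replicate k a) (replicate y (\<not>a) @ replicate z a) = 0"
        using i by simp
    qed
  qed
  then show ?thesis using in2 by simp
qed



lemma R: "(q = [] \<or> hd q \<noteq> a) \<Longrightarrow> 0 < i \<Longrightarrow> remdups_adj (replicate i a @ q) = a # remdups_adj q"
proof (induction i)
  case 0 then show ?case by simp
next
  case (Suc i)
  show ?case
  proof (cases i)
    case 0
    then show ?thesis using Suc.prems by (cases q) auto
  next
    case (Suc i')
    then show ?thesis using Suc.IH Suc.prems by simp
  qed
qed

lemma runs1: "0 < x \<Longrightarrow> runs (replicate x a) = 1"
  using R[of "[]" a x] by (simp add: runs_def)

lemma runs3: "0 < x \<Longrightarrow> 0 < y \<Longrightarrow>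
  runs (replicate x a @ replicate y (\<not>a) @ replicate z a) = (if z = 0 then 2 else 3)"
proof -
  assume x: "0 < x" and y: "0 < y"
  have a: "remdups_adj (replicate y (\<not>a) @ replicate z a) = (\<not>a) # remdups_adj (replicate z a)"
    using y by (intro R) (cases z, auto)
  have b: "remdups_adj (replicate x a @ replicate y (\<not>a) @ replicate z a) = a # remdups_adj (replicate y (\<not>a) @ replicate z a)"
    using x y by (intro R) (cases y, auto)
  show ?thesis
  proof (cases z)
    case 0 then show ?thesis using a b by (simp add: runs_def)
  next
    case (Suc z')
    then have "remdups_adj (replicate z a) = [a]" using R[of "[]" a z] by simp
    then show ?thesis using a b Suc by (simp add: runs_def)
  qed
qed

lemma peel: "p \<noteq> [] \<Longrightarrow> \<exists>i q. 0 < i \<and> p = replicate i (hd p) @ q \<and> (q = [] \<or> hd q \<noteq> hd p)"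
proof -
  assume p: "p \<noteq> []"
  define t where "t = takeWhile (\<lambda>x. x = hd p) p"
  define q where "q = dropWhile (\<lambda>x. x = hd p) p"
  have pq: "p = t @ q" unfolding t_def q_def by simp
  have tr: "replicate (length t) (hd p) = t"
    by (rule replicate_length_same) (auto simp: t_def dest: set_takeWhileD)
  have tl: "0 < length t" using p unfolding t_def by (cases p) auto
  have hq: "q = [] \<or> hd q \<noteq> hd p" unfolding q_def using hd_dropWhile by blast
  show ?thesis using pq tr tl hq by metis
qed

lemma runs_peel: "0 < i \<Longrightarrow> (q = [] \<or> hd q \<noteq> a) \<Longrightarrow> runs (replicate i a @ q) = Suc (runs q)"
  using R[of q a i] by (simp add: runs_def)

lemma decomp: "p \<noteq> [] \<Longrightarrow> runs p \<le> 3 \<Longrightarrow>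
  \<exists>a i j k. 0 < i \<and> p = replicate i a @ replicate j (\<not>a) @ replicate k a \<and> (j = 0 \<longrightarrow> k = 0)"
proof -
  assume p: "p \<noteq> []" and r: "runs p \<le> 3"
  define a where "a = hd p"
  obtain i q1 where 1: "0 < i" "p = replicate i a @ q1" "q1 = [] \<or> hd q1 \<noteq> a"
    using peel[OF p] unfolding a_def by blast
  show ?thesis
  proof (cases "q1 = []")
    case True
    then show ?thesis using 1 by (intro exI[of _ a] exI[of _ i] exI[of _ 0]) auto
  next
    case False
    have h1: "hd q1 = (\<not>a)" using 1(3) False by auto
    obtain j q2 where 2: "0 < j" "q1 = replicate j (\<not>a) @ q2" "q2 = [] \<or> hd q2 \<noteq> (\<not>a)"
      using peel[OF False] unfolding h1 by blast
    show ?thesis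
    proof (cases "q2 = []")
      case True
      then show ?thesis using 1 2 by (intro exI[of _ a] exI[of _ i] exI[of _ j] exI[of _ 0]) auto
    next
      case False
      have h2: "hd q2 = a" using 2(3) False by auto
      obtain k q3 where 3: "0 < k" "q2 = replicate k a @ q3" "q3 = [] \<or> hd q3 \<noteq> a"
        using peel[OF False] unfolding h2 by blast
      have "runs p = Suc (Suc (Suc (runs q3)))"
        using 1 2 3 h1 h2 False \<open>q1 \<noteq> []\<close> by (simp add: runs_peel)
      then have "runs q3 = 0" using r by simp
      then have "q3 = []" by (simp add: runs_def)
      then show ?thesis using 1 2 3 by (intro exI[of _ a] exI[of _ i] exI[of _ j] exI[of _ k]) auto
    qed
  qed
qed

lemma argmax_nat: "\<exists>x0\<le>(s::nat). \<forall>x\<le>s. f x \<le> (f x0::nat)"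
proof (induction s)
  case 0 then show ?case by auto
next
  case (Suc s)
  then obtain x0 where x0: "x0 \<le> s" "\<forall>x\<le>s. f x \<le> f x0" by blast
  show ?case
  proof (cases "f x0 \<le> f (Suc s)")
    case True
    then show ?thesis using x0 by (intro exI[of _ "Suc s"]) (auto simp: le_Suc_eq)
  next
    case False
    then show ?thesis using x0 by (intro exI[of _ x0]) (auto simp: le_Suc_eq)
  qed
qed

lemma bound3:
  assumes j: "0 < j" and k: "0 < k"
  shows "\<exists>x y z. x + y + z = length w \<and> 
     cnt (replicate i a @ replicate j (\<not>a) @ replicate k a) w \<le> (x choose i) * (y choose j) * (z choose k)"
proof -
  define s where "s = ca a w"
  define t where "t = ca (\<not>a) w"
  have st: "s + t = length w" unfolding s_def t_def by (rule ca_compl)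
  obtain x0 where x0: "x0 \<le> s" "\<forall>x\<le>s. (x choose i) * ((s - x) choose k) \<le> (x0 choose i) * ((s - x0) choose k)"
    using argmax_nat[of s "\<lambda>x. (x choose i) * ((s - x) choose k)"] by blast
  define G where "G = (x0 choose i) * ((s - x0) choose k)"
  define q where "q = replicate (j - 1) (\<not>a) @ replicate k a"
  have pe: "replicate i a @ replicate j (\<not>a) @ replicate k a = replicate i a @ (\<not>a) # q"
    unfolding q_def using j by (cases j) auto
  have termb: "(if w!m = (\<not>a) then (ca a (take m w) choose i) * cnt q (drop (Suc m) w) else 0)
      \<le> (if w!m = (\<not>a) then G * (ca (\<not>a) (drop (Suc m) w) choose (j - 1)) else 0)"
    if m: "m \<in> {..<length w}" for m
  proof (cases "w!m = (\<not>a)")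
    case True
    define D where "D = drop (Suc m) w"
    define \<alpha> where "\<alpha> = ca a (take m w)"
    have "w = take m w @ w!m # D" unfolding D_def using m id_take_nth_drop by auto
    then have "ca a w = ca a (take m w @ w!m # D)" by (rule arg_cong)
    then have "s = \<alpha> + ca a D" unfolding s_def \<alpha>_def using True by simp
    then have sa: "\<alpha> \<le> s" "ca a D = s - \<alpha>" by auto
    have c2: "cnt q D \<le> (ca (\<not>a) D choose (j - 1)) * (ca a D choose k)"
      using L2[of "j - 1" "\<not>a" k D] unfolding q_def by simp
    have "(\<alpha> choose i) * cnt q D \<le> (\<alpha> choose i) * ((ca (\<not>a) D choose (j - 1)) * ((s - \<alpha>) choose k))"
      using c2 sa by simp
    also have "\<dots> = ((\<alpha> choose i) * ((s - \<alpha>) choose k)) * (ca (\<not>a) D choose (j - 1))"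
      by simp
    also have "\<dots> \<le> G * (ca (\<not>a) D choose (j - 1))"
      using x0(2) sa(1) unfolding G_def by (intro mult_right_mono) auto
    finally show ?thesis using True unfolding D_def \<alpha>_def by simp
  qed simp
  have "cnt (replicate i a @ replicate j (\<not>a) @ replicate k a) w =
     (\<Sum>m<length w. if w!m = (\<not>a) then (ca a (take m w) choose i) * cnt q (drop (Suc m) w) else 0)"
    unfolding pe by (rule L3)
  also have "\<dots> \<le> (\<Sum>m<length w. if w!m = (\<not>a) then G * (ca (\<not>a) (drop (Suc m) w) choose (j - 1)) else 0)"
    by (rule sum_mono) (rule termb)
  also have "\<dots> = G * (\<Sum>m<length w. if w!m = (\<not>a) then (ca (\<not>a) (drop (Suc m) w) choose (j - 1)) else 0)"
    by (simp add: sum_distrib_left if_distrib cong: if_cong)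
  also have "(\<Sum>m<length w. if w!m = (\<not>a) then (ca (\<not>a) (drop (Suc m) w) choose (j - 1)) else 0)
      = cnt (replicate 0 a @ (\<not>a) # replicate (j - 1) (\<not>a)) w"
    unfolding L3 by (simp add: L1 cong: if_cong)
  also have "cnt (replicate 0 a @ (\<not>a) # replicate (j - 1) (\<not>a)) w = t choose j"
    using j L1[of j "\<not>a" w] unfolding t_def by (cases j) auto
  finally have "cnt (replicate i a @ replicate j (\<not>a) @ replicate k a) w \<le> (x0 choose i) * (t choose j) * ((s - x0) choose k)"
    unfolding G_def by (simp add: algebra_simps)
  moreover have "x0 + t + (s - x0) = length w" using st x0(1) by simp
  ultimately show ?thesis by blast
qed

lemma bound2:
  shows "\<exists>x y. x + y = length w \<and> 
     cnt (replicate i a @ replicate j (\<not>a)) w \<le> (x choose i) * (y choose j)"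
  using L2[of i a j w] ca_compl[of a w] by blast



lemma fin_words: "finite {w::bool list. length w = n}"
proof -
  have "{w::bool list. length w = n} = {xs. set xs \<subseteq> UNIV \<and> length xs = n}" by simp
  then show ?thesis using finite_lists_length_eq[of "UNIV::bool set" n] by simp
qed

lemma opt: "(\<forall>w. length w = length W \<longrightarrow> cnt p w \<le> cnt p W) \<Longrightarrow> p_optimal p W"
  unfolding p_optimal_def max_count_def subseq_count_cnt
proof -
  assume h: "\<forall>w. length w = length W \<longrightarrow> cnt p w \<le> cnt p W"
  have e: "{cnt p w |w. length w = length W} = (cnt p) ` {w. length w = length W}" by auto
  show "cnt p W = Max {cnt p w |w. length w = length W}"
    unfolding e using h fin_words by (intro Max_eqI[symmetric]) auto
qed

lemma ex_max_fin: "finite A \<Longrightarrow> A \<noteq> {} \<Longrightarrow> \<exists>a\<in>A. \<forall>b\<in>A. (f b::nat) \<le> f a"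
proof -
  assume A: "finite A" "A \<noteq> {}"
  then have "Max (f ` A) \<in> f ` A" by simp
  then obtain a where a: "a \<in> A" "f a = Max (f ` A)" by auto
  then show ?thesis using A by (metis Max_ge finite_imageI image_eqI)
qed

lemma case1:
  assumes "0 < i" "i \<le> n"
  shows "\<exists>w. length w = n \<and> p_optimal (replicate i a) w \<and> runs w = 1"
proof (intro exI conjI)
  show "length (replicate n a) = n" by simp
  show "runs (replicate n a) = 1" using assms by (intro runs1) simp
  show "p_optimal (replicate i a) (replicate n a)"
    by (rule opt) (auto simp: L1 intro!: binomial_right_mono ca_le)
qed

lemma case23:
  assumes i: "0 < i" and j: "0 < j" and n: "i + j + k \<le> n"
  shows "\<exists>w. length w = n \<and> p_optimal (replicate i a @ replicate j (\<not>a) @ replicate k a) w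
     \<and> runs w = (if k = 0 then 2 else 3)"
proof -
  define p where "p = replicate i a @ replicate j (\<not>a) @ replicate k a"
  define T where "T = {(x,y,z). x + y + z = n \<and> (k = 0 \<longrightarrow> z = 0)}"
  define f where "f = (\<lambda>(x,y,z). (x choose i) * (y choose j) * (z choose k))"
  have Tsub: "T \<subseteq> {0..n} \<times> {0..n} \<times> {0..n}" unfolding T_def by auto
  have fT: "finite T" by (rule finite_subset[OF Tsub]) auto
  have inT: "(i, n - i - k, k) \<in> T" unfolding T_def using n by auto
  obtain x y z where xyz: "(x,y,z) \<in> T" "\<forall>b\<in>T. f b \<le> f (x,y,z)"
  proof -
    have "T \<noteq> {}" using inT by blast
    then obtain b where "b \<in> T" "\<forall>c\<in>T. f c \<le> f b" using ex_max_fin[OF fT, of f] by blast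
    then show ?thesis using that by (cases b) auto
  qed
  have pos0: "0 < f (i, n - i - k, k)" unfolding f_def using n by simp
  have pos: "0 < f (x,y,z)" using xyz(2) inT pos0 by (meson order_less_le_trans)
  then have ge: "i \<le> x" "j \<le> y" "k \<le> z" unfolding f_def by auto
  define W where "W = replicate x a @ replicate y (\<not>a) @ replicate z a"
  have lenW: "length W = n" using xyz(1) unfolding W_def T_def by simp
  have valW: "cnt p W = f (x,y,z)" unfolding p_def W_def f_def using val3[OF j] by simp
  have optW: "p_optimal p W"
  proof (rule opt, intro allI impI)
    fix w :: "bool list" assume lw: "length w = length W"
    have "\<exists>b\<in>T. cnt p w \<le> f b"
    proof (cases "k = 0")
      case True
      obtain x' y' where "x' + y' = length w" "cnt (replicate i a @ replicate j (\<not>a)) w \<le> (x' choose i) * (y' choose j)"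
        using bound2 by blast
      then show ?thesis using True lw lenW
        by (intro bexI[of _ "(x', y', 0)"]) (auto simp: p_def f_def T_def)
    next
      case False
      obtain x' y' z' where "x' + y' + z' = length w" "cnt p w \<le> (x' choose i) * (y' choose j) * (z' choose k)"
        using bound3[OF j, of k w i a] False unfolding p_def by auto
      then show ?thesis using False lw lenW
        by (intro bexI[of _ "(x', y', z')"]) (auto simp: f_def T_def)
    qed
    then show "cnt p w \<le> cnt p W" using xyz(2) valW by auto
  qed
  have runsW: "runs W = (if k = 0 then 2 else 3)"
  proof -
    have "runs W = (if z = 0 then 2 else 3)" unfolding W_def using ge i j by (intro runs3) auto
    moreover have "z = 0 \<longleftrightarrow> k = 0" using xyz(1) ge unfolding T_def by auto
    ultimately show ?thesis by simp
  qed
  show ?thesis using lenW optW runsW unfolding p_def by blast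
qed

theorem mainTheorem8:
  fixes p :: "bool list" and n :: nat
  assumes "p \<noteq> []" and "runs p \<le> 3" and "n \<ge> length p"
  shows "\<exists>w. length w = n \<and> p_optimal p w \<and> runs w = runs p"
proof -
  obtain a i j k where d: "0 < i" "p = replicate i a @ replicate j (\<not>a) @ replicate k a" "j = 0 \<longrightarrow> k = 0"
    using decomp[OF assms(1,2)] by blast
  have len: "i + j + k \<le> n" using assms(3) d(2) by simp
  show ?thesis
  proof (cases "j = 0")
    case True
    then have pe: "p = replicate i a" using d by simp
    then show ?thesis using case1[OF d(1), of n a] len runs1[OF d(1), of a] by simp
  next
    case False
    then have "0 < j" by simp
    have "runs p = (if k = 0 then 2 else 3)" unfolding d(2) using d(1) \<open>0 < j\<close> by (rule runs3)
    then show ?thesis using case23[OF d(1) \<open>0 < j\<close> len, of a] d(2) by simp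
  qed
qed

end
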